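(* Let $n\geq 4$. The wheel $W_n$ is not strong cop-win (i.e. not strong $1$-cop-win), but it is strong 2-cop-win, and $\lim_{m\to\infty}\mathrm{capt}_2(W_n,m)=n-3$.
   Context: The wheel $W_n$ ($n\geq 4$) is the cycle $C_{n-1}$ together with one additional vertex adjacent to all cycle vertices. All graphs are reflexive (a player may stay in place). The game of $k$ cops and $m$ robbers on $G$: in round 0 the cops first choose starting vertices, then the robbers choose theirs. In each round $i\geq 1$, all $k$ cops move (each to an adjacent vertex or staying), then all $m$ robbers move likewise. Several players may occupy the same vertex. Whenever a cop and some robbers occupy the same vertex, those robbers are captured and take no further part in the game. Both sides have full information. The cops win if all robbers are captured after finitely many rounds. $G$ is $k$-cop-win if $k$ cops can always win against one robber. For a $k$-cop-win graph $G$, $\mathrm{capt}_k(G,m)$ is the index of the round in which the last robber is captured when $k$ cops play to minimize this index and $m$ robbers play to maximize it. $G$ is strong $k$-cop-win if $\lim_{m\to\infty}\mathrm{capt}_k(G,m)$ exists (and is finite). *)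

theory Defs
  imports Complex_Main
begin

(* A graph is given by a vertex set V and an (irreflexive, symmetric) edge relation E
   whose edges lie inside V.  Graphs are reflexive for the game: a player may stay. *)

definition step :: "('v \<Rightarrow> 'v \<Rightarrow> bool) \<Rightarrow> 'v \<Rightarrow> 'v \<Rightarrow> bool" where
  "step E u w \<longleftrightarrow> u = w \<or> E u w"

definition alive :: "'v list \<Rightarrow> 'v list \<Rightarrow> 'v list" where
  "alive C R = filter (\<lambda>r. r \<notin> set C) R"

(* cops_force E t C R: from a position at the end of a round, with cops at C and
   uncaptured robbers at R, the cops can force that all robbers are captured within
   the next t rounds, whatever the robbers do. *)
fun cops_force :: "('v \<Rightarrow> 'v \<Rightarrow> bool) \<Rightarrow> nat \<Rightarrow> 'v list \<Rightarrow> 'v list \<Rightarrow> bool" where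
  "cops_force E 0 C R \<longleftrightarrow> R = []"
| "cops_force E (Suc t) C R \<longleftrightarrow> R = [] \<or>
     (\<exists>C'. list_all2 (step E) C C' \<and>
        (\<forall>R'. list_all2 (step E) (alive C' R) R' \<longrightarrow> cops_force E t C' (alive C' R')))"

(* k cops can guarantee that all m robbers are captured by round t (round 0 = placement) *)
definition capt_within :: "'v set \<Rightarrow> ('v \<Rightarrow> 'v \<Rightarrow> bool) \<Rightarrow> nat \<Rightarrow> nat \<Rightarrow> nat \<Rightarrow> bool" where
  "capt_within V E k m t \<longleftrightarrow>
     (\<exists>C. length C = k \<and> set C \<subseteq> V \<and>
        (\<forall>R. length R = m \<and> set R \<subseteq> V \<longrightarrow> cops_force E t C (alive C R)))"

definition cop_win :: "'v set \<Rightarrow> ('v \<Rightarrow> 'v \<Rightarrow> bool) \<Rightarrow> nat \<Rightarrow> bool" where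
  "cop_win V E k \<longleftrightarrow> (\<exists>t. capt_within V E k 1 t)"

definition capt :: "'v set \<Rightarrow> ('v \<Rightarrow> 'v \<Rightarrow> bool) \<Rightarrow> nat \<Rightarrow> nat \<Rightarrow> nat" where
  "capt V E k m = (LEAST t. capt_within V E k m t)"

definition strong_cop_win :: "'v set \<Rightarrow> ('v \<Rightarrow> 'v \<Rightarrow> bool) \<Rightarrow> nat \<Rightarrow> bool" where
  "strong_cop_win V E k \<longleftrightarrow> cop_win V E k \<and> (\<exists>L. (\<lambda>m. real (capt V E k m)) \<longlonglongrightarrow> L)"

(* Wheel W_n: hub 0, cycle 1,2,...,n-1,1 *)
definition wheel_V :: "nat \<Rightarrow> nat set" where
  "wheel_V n = {0..<n}"

definition wheel_E :: "nat \<Rightarrow> nat \<Rightarrow> nat \<Rightarrow> bool" where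
  "wheel_E n u w \<longleftrightarrow> u \<noteq> w \<and>
     ((u = 0 \<and> w \<in> {1..<n}) \<or> (w = 0 \<and> u \<in> {1..<n}) \<or>
      (u \<in> {1..<n} \<and> w \<in> {1..<n} \<and> (w = u mod (n - 1) + 1 \<or> u = w mod (n - 1) + 1)))"

end

theory Submission
  imports Defs
begin

lemma cops_force_nil[simp]: "cops_force E t C []"
  by (cases t) auto

lemma alive_map: "alive C (map fst P) = map fst (filter (\<lambda>p. fst p \<notin> set C) P)"
  by (simp add: alive_def filter_map o_def)

lemma list_all2_stepD: "list_all2 P xs ys \<Longrightarrow> y \<in> set ys \<Longrightarrow> \<exists>x\<in>set xs. P x y"
  by (metis in_set_conv_nth list_all2_conv_all_nth)

lemma list_all2_stepD': "list_all2 P xs ys \<Longrightarrow> x \<in> set xs \<Longrightarrow> \<exists>y\<in>set ys. P x y"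
  by (metis in_set_conv_nth list_all2_conv_all_nth)

lemma force_step:
  assumes "list_all2 (step E) C C'"
    and "\<And>R'. length R' \<le> length (alive C' R) \<Longrightarrow> set R' \<inter> set C' = {} \<Longrightarrow>
           (\<forall>r'\<in>set R'. \<exists>r\<in>set R. r \<notin> set C' \<and> step E r r') \<Longrightarrow> cops_force E t C' R'"
  shows "cops_force E (Suc t) C R"
proof -
  have "\<forall>R'. list_all2 (step E) (alive C' R) R' \<longrightarrow> cops_force E t C' (alive C' R')"
  proof (intro allI impI)
    fix R' assume h: "list_all2 (step E) (alive C' R) R'"
    show "cops_force E t C' (alive C' R')"
    proof (rule assms(2))
      have "length (alive C' R') \<le> length R'" by (simp add: alive_def)
      also have "\<dots> = length (alive C' R)" using h by (simp add: list_all2_lengthD)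
      finally show "length (alive C' R') \<le> length (alive C' R)" .
      show "set (alive C' R') \<inter> set C' = {}" by (auto simp: alive_def)
      show "\<forall>r'\<in>set (alive C' R'). \<exists>r\<in>set R. r \<notin> set C' \<and> step E r r'"
      proof
        fix r' assume "r' \<in> set (alive C' R')"
        then have "r' \<in> set R'" by (simp add: alive_def)
        then obtain r where "r \<in> set (alive C' R)" "step E r r'" using list_all2_stepD[OF h] by blast
        then show "\<exists>r\<in>set R. r \<notin> set C' \<and> step E r r'" by (auto simp: alive_def)
      qed
    qed
  qed
  then show ?thesis using assms(1) by auto
qed

lemma survive:
  fixes Good :: "nat \<Rightarrow> 'v list \<Rightarrow> 'v set \<Rightarrow> bool"
  assumes a: "\<And>t C S. Good t C S \<Longrightarrow> S \<noteq> {} \<and> S \<subseteq> V"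
  and b: "\<And>t C S C'. Good (Suc t) C S \<Longrightarrow> list_all2 (step E) C C' \<Longrightarrow>
            Good t C' ({w. \<exists>x\<in>S - set C'. step E x w} - set C')"
  shows "Good t C S \<Longrightarrow> (\<forall>v\<in>S. \<forall>s. set s \<subseteq> V \<and> length s = t \<longrightarrow> (v,s) \<in> set P)
     \<Longrightarrow> \<not> cops_force E t C (map fst P)"
proof (induction t arbitrary: C S P)
  case 0
  then obtain v where "v \<in> S" using a by blast
  then have "(v, []) \<in> set P" using 0 by auto
  then show ?case by auto
next
  case (Suc t)
  obtain v where v: "v \<in> S" "v \<in> V" using a[OF Suc.prems(1)] by blast
  have "set (replicate (Suc t) v) = {v}" by (induct t) auto
  then have "set (replicate (Suc t) v) \<subseteq> V" using v by (metis insert_subset empty_subsetI)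
  then have "(v, replicate (Suc t) v) \<in> set P"
    by (intro Suc.prems(2)[rule_format, OF v(1)]) simp
  then have ne: "map fst P \<noteq> []" by auto
  have "\<exists>R'. list_all2 (step E) (alive C' (map fst P)) R' \<and> \<not> cops_force E t C' (alive C' R')"
    if C': "list_all2 (step E) C C'" for C'
  proof -
    define Pf where "Pf = filter (\<lambda>p. fst p \<notin> set C') P"
    define mv where "mv = (\<lambda>p::'v \<times> 'v list. (if snd p \<noteq> [] \<and> step E (fst p) (hd (snd p)) then hd (snd p) else fst p, tl (snd p)))"
    define S' where "S' = {w. \<exists>x\<in>S - set C'. step E x w} - set C'"
    define P2 where "P2 = filter (\<lambda>p. fst p \<notin> set C') (map mv Pf)"
    have G: "Good t C' S'" unfolding S'_def by (rule b[OF Suc.prems(1) C'])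
    have al: "alive C' (map fst P) = map fst Pf" by (simp add: Pf_def alive_map)
    have la: "list_all2 (step E) (map fst Pf) (map (fst \<circ> mv) Pf)"
      unfolding list.rel_map by (rule list_all2_refl) (auto simp: mv_def step_def)
    have al2: "alive C' (map (fst \<circ> mv) Pf) = map fst P2"
    proof -
      have "map (fst \<circ> mv) Pf = map fst (map mv Pf)" by simp
      then show ?thesis by (simp only: P2_def alive_map)
    qed
    have cov: "\<forall>u\<in>S'. \<forall>s. set s \<subseteq> V \<and> length s = t \<longrightarrow> (u,s) \<in> set P2"
    proof (intro ballI allI impI)
      fix u s assume u: "u \<in> S'" and s: "set s \<subseteq> V \<and> length s = t"
      then obtain x where x: "x \<in> S" "x \<notin> set C'" "step E x u" "u \<notin> set C'" unfolding S'_def by blast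
      have "u \<in> V" using a[OF G] u by blast
      then have "set (u # s) \<subseteq> V \<and> length (u # s) = Suc t" using s by simp
      then have "(x, u # s) \<in> set P" by (rule Suc.prems(2)[rule_format, OF x(1)])
      then have "(x, u # s) \<in> set Pf" using x by (simp add: Pf_def)
      moreover have "mv (x, u # s) = (u, s)" using x by (simp add: mv_def)
      ultimately have "(u, s) \<in> set (map mv Pf)" by (metis image_eqI set_map)
      then show "(u, s) \<in> set P2" using x by (simp add: P2_def)
    qed
    have "\<not> cops_force E t C' (map fst P2)" by (rule Suc.IH[OF G cov])
    show ?thesis
    proof (intro exI conjI)
      show "list_all2 (step E) (alive C' (map fst P)) (map (fst \<circ> mv) Pf)" unfolding al by (rule la)
      show "\<not> cops_force E t C' (alive C' (map (fst \<circ> mv) Pf))" unfolding al2 by fact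
    qed
  qed
  then show ?case using ne by (simp only: cops_force.simps) blast
qed
lemma no_capt:
  fixes Good :: "nat \<Rightarrow> 'v list \<Rightarrow> 'v set \<Rightarrow> bool"
  assumes fin: "finite V"
  and a: "\<And>t C S. Good t C S \<Longrightarrow> S \<noteq> {} \<and> S \<subseteq> V"
  and b: "\<And>t C S C'. Good (Suc t) C S \<Longrightarrow> list_all2 (step E) C C' \<Longrightarrow>
            Good t C' ({w. \<exists>x\<in>S - set C'. step E x w} - set C')"
  and init: "\<And>C. length C = k \<Longrightarrow> set C \<subseteq> V \<Longrightarrow> Good t C (V - set C)"
  and m: "card V * card V ^ t \<le> m"
  shows "\<not> capt_within V E k m t"
proof
  assume "capt_within V E k m t"
  then obtain C where C: "length C = k" "set C \<subseteq> V"
    and all: "\<And>R. length R = m \<Longrightarrow> set R \<subseteq> V \<Longrightarrow> cops_force E t C (alive C R)"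
    unfolding capt_within_def by blast
  have G: "Good t C (V - set C)" by (rule init[OF C])
  define A where "A = V \<times> {s. set s \<subseteq> V \<and> length s = t}"
  have finA: "finite A" unfolding A_def using fin by (simp add: finite_lists_length_eq)
  have cardA: "card A = card V * card V ^ t" unfolding A_def
    by (simp add: card_cartesian_product card_lists_length_eq fin)
  obtain xs where xs: "set xs = A" "distinct xs" using finite_distinct_list[OF finA] by blast
  have lxs: "length xs = card A" using xs by (metis distinct_card)
  obtain v where v: "v \<in> V - set C" using a[OF G] by blast
  have "(v, replicate t v) \<in> A" unfolding A_def using v by (simp add: set_replicate_conv_if)
  then have xsne: "xs \<noteq> []" using xs by auto
  define P where "P = xs @ replicate (m - length xs) (hd xs)"
  have lP: "length P = m" unfolding P_def using lxs cardA m by simp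
  have sA: "set P = A" unfolding P_def using xs xsne by (auto simp: set_replicate_conv_if)
  have sP: "set (map fst P) \<subseteq> V" using sA unfolding A_def by auto
  have cf: "cops_force E t C (map fst (filter (\<lambda>p. fst p \<notin> set C) P))"
    using all[of "map fst P"] lP sP by (simp add: alive_map)
  have "\<not> cops_force E t C (map fst (filter (\<lambda>p. fst p \<notin> set C) P))"
  proof (rule survive[where Good = Good, OF a b G])
    show "\<forall>v\<in>V - set C. \<forall>s. set s \<subseteq> V \<and> length s = t \<longrightarrow> (v, s) \<in> set (filter (\<lambda>p. fst p \<notin> set C) P)"
      using sA unfolding A_def by auto
  qed (auto)
  then show False using cf by blast
qed
lemma wE_lt: "wheel_E n u w \<Longrightarrow> u < n \<and> w < n"
  unfolding wheel_E_def by auto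

lemma step_lt: "step (wheel_E n) u w \<Longrightarrow> u < n \<Longrightarrow> w < n"
  unfolding step_def using wE_lt by blast

lemma wE_sym: "wheel_E n u w = wheel_E n w u"
  unfolding wheel_E_def by auto

lemma wE_hub: "1 \<le> v \<Longrightarrow> v < n \<Longrightarrow> wheel_E n 0 v \<and> wheel_E n v 0"
  unfolding wheel_E_def by auto

lemma wE_succ: "n \<ge> 4 \<Longrightarrow> 1 \<le> v \<Longrightarrow> v + 2 \<le> n \<Longrightarrow> wheel_E n v (v+1) \<and> wheel_E n (v+1) v"
  unfolding wheel_E_def by auto

lemma wE_wrap: "n \<ge> 4 \<Longrightarrow> wheel_E n (n-1) 1 \<and> wheel_E n 1 (n-1)"
  unfolding wheel_E_def by auto

lemma nbr: assumes "n \<ge> 4" "2 \<le> r" "r + 2 \<le> n" "step (wheel_E n) r r'"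
  shows "r' = 0 \<or> r' + 1 = r \<or> r' = r \<or> r' = r + 1"
proof -
  have rm: "r mod (n - 1) = r" using assms by simp
  show ?thesis
  proof (cases "r' = r")
    case False
    then have e: "wheel_E n r r'" using assms(4) by (simp add: step_def)
    show ?thesis
    proof (cases "r' = 0")
      case False
      then have r': "1 \<le> r'" "r' < n" using e unfolding wheel_E_def by auto
      have "r' = r + 1 \<or> r = r' mod (n - 1) + 1" using e False rm assms(2) unfolding wheel_E_def by auto
      moreover have "r = r' mod (n - 1) + 1 \<Longrightarrow> r' + 1 = r"
      proof (cases "r' = n - 1")
        case True
        then show "r = r' mod (n - 1) + 1 \<Longrightarrow> r' + 1 = r" using assms by simp
      next
        case False
        then have "r' mod (n - 1) = r'" using r' by simp
        then show "r = r' mod (n - 1) + 1 \<Longrightarrow> r' + 1 = r" by simp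
      qed
      ultimately show ?thesis by blast
    qed simp
  qed simp
qed

definition sc :: "nat \<Rightarrow> nat \<Rightarrow> nat" where "sc n v = v mod (n - 1) + 1"
definition pr :: "nat \<Rightarrow> nat \<Rightarrow> nat" where "pr n v = (if v = 1 then n - 1 else v - 1)"

lemma sc_props: assumes "n \<ge> 4" "1 \<le> v" "v < n"
  shows "1 \<le> sc n v \<and> sc n v < n \<and> sc n v \<noteq> v \<and> wheel_E n v (sc n v) \<and> wheel_E n (sc n v) v"
proof (cases "v = n - 1")
  case True
  then show ?thesis using assms wE_wrap[OF assms(1)] by (simp add: sc_def)
next
  case False
  then have "v mod (n - 1) = v" using assms by simp
  then show ?thesis using assms wE_succ[OF assms(1) assms(2)] False by (simp add: sc_def)
qed

lemma pr_props: assumes "n \<ge> 4" "1 \<le> v" "v < n"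
  shows "1 \<le> pr n v \<and> pr n v < n \<and> pr n v \<noteq> v \<and> wheel_E n v (pr n v) \<and> wheel_E n (pr n v) v \<and> sc n (pr n v) = v"
proof (cases "v = 1")
  case True
  moreover have "Suc 0 \<le> n - Suc 0 \<and> n - Suc 0 \<noteq> Suc 0" using assms by linarith
  ultimately show ?thesis using assms wE_wrap[OF assms(1)] by (simp add: sc_def pr_def)
next
  case False
  then have "(v - 1) mod (n - 1) = v - 1" using assms by simp
  moreover have "Suc 0 \<le> v - Suc 0 \<and> v - Suc 0 < n \<and> v - Suc 0 \<noteq> v" using assms False by linarith
  ultimately show ?thesis using assms wE_succ[OF assms(1), of "v - 1"] False by (simp add: sc_def pr_def)
qed
lemma alive_shorter: "r \<in> set R \<Longrightarrow> r \<in> set C \<Longrightarrow> length (alive C R) < length R"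
  unfolding alive_def by (rule length_filter_less) auto

lemma one_cop: assumes n: "n \<ge> 4"
  shows "\<forall>R. set R \<subseteq> {1..<n} \<longrightarrow> length R \<le> k \<longrightarrow> cops_force (wheel_E n) (2*k) [0] R"
proof (induction k)
  case 0
  then show ?case by simp
next
  case (Suc k)
  show ?case
  proof (intro allI impI)
    fix R :: "nat list" assume R: "set R \<subseteq> {1..<n}" "length R \<le> Suc k"
    show "cops_force (wheel_E n) (2 * Suc k) [0] R"
    proof (cases R)
      case Nil then show ?thesis by simp
    next
      case (Cons r rs)
      then have r: "r \<in> set R" "1 \<le> r" "r < n" using R by auto
      have eq: "2 * Suc k = Suc (Suc (2 * k))" by simp
      show ?thesis unfolding eq
      proof (rule force_step[where C' = "[r]"])
        show "list_all2 (step (wheel_E n)) [0] [r]" using wE_hub[OF r(2,3)] by (simp add: step_def)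
        fix R1 assume R1: "length R1 \<le> length (alive [r] R)" "set R1 \<inter> set [r] = {}"
          "\<forall>r'\<in>set R1. \<exists>x\<in>set R. x \<notin> set [r] \<and> step (wheel_E n) x r'"
        have R1n: "set R1 \<subseteq> {0..<n}"
        proof
          fix y assume "y \<in> set R1"
          then obtain x where "x \<in> set R" "step (wheel_E n) x y" using R1(3) by blast
          then show "y \<in> {0..<n}" using R step_lt by fastforce
        qed
        have lR1: "length R1 \<le> k" using R1(1) alive_shorter[OF r(1), of "[r]"] R(2) by simp
        show "cops_force (wheel_E n) (Suc (2 * k)) [r] R1"
        proof (rule force_step[where C' = "[0]"])
          show "list_all2 (step (wheel_E n)) [r] [0]" using wE_hub[OF r(2,3)] by (simp add: step_def)
          fix R2 assume R2: "length R2 \<le> length (alive [0] R1)" "set R2 \<inter> set [0] = {}"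
            "\<forall>r'\<in>set R2. \<exists>x\<in>set R1. x \<notin> set [0] \<and> step (wheel_E n) x r'"
          have "set R2 \<subseteq> {1..<n}"
          proof
            fix y assume y: "y \<in> set R2"
            then obtain x where "x \<in> set R1" "step (wheel_E n) x y" using R2(3) by blast
            then have "y < n" using R1n step_lt by fastforce
            moreover have "y \<noteq> 0" using y R2(2) by (metis IntI empty_iff list.set_intros(1))
            ultimately show "y \<in> {1..<n}" by simp
          qed
          moreover have "length R2 \<le> k" using R2(1) lR1 by (simp add: alive_def) (meson le_trans length_filter_le)
          ultimately show "cops_force (wheel_E n) (2 * k) [0] R2" using Suc.IH by blast
        qed
      qed
    qed
  qed
qed

lemma capt1_upper: assumes n: "n \<ge> 4" shows "capt_within (wheel_V n) (wheel_E n) 1 m (2*m)"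
  unfolding capt_within_def
proof (intro exI[of _ "[0]"] conjI allI impI)
  show "set [0] \<subseteq> wheel_V n" using n by (simp add: wheel_V_def)
  fix R :: "nat list" assume R: "length R = m \<and> set R \<subseteq> wheel_V n"
  have "set (alive [0] R) \<subseteq> {1..<n}" using R by (auto simp: alive_def wheel_V_def)
  moreover have "length (alive [0] R) \<le> m" using R unfolding alive_def by (metis length_filter_le)
  ultimately show "cops_force (wheel_E n) (2 * m) [0] (alive [0] R)" using one_cop[OF n] by blast
qed simp
lemma map_step: assumes "\<And>x. x \<in> set C \<Longrightarrow> step E x (f x)"
  shows "list_all2 (step E) C (map f C)"
  unfolding list.rel_map by (rule list.rel_refl_strong) (rule assms)

lemma no_src_nil: assumes "\<forall>r'\<in>set R'. \<exists>r\<in>set R. r \<notin> X \<and> step E r r'"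
  and "\<And>r. r \<in> set R \<Longrightarrow> r \<notin> X \<Longrightarrow> False"
  shows "R' = []"
  using assms by (cases R') auto

lemma two_cop: assumes n: "n \<ge> 4"
  shows "(\<forall>j C R. length C = 2 \<and> set C = {0, j+1} \<and> 2 \<le> j \<and> j+2 \<le> n \<and> set R \<subseteq> {2..j} \<and> j \<le> t+2 \<and> 1 \<le> t
            \<longrightarrow> cops_force (wheel_E n) t C R) \<and>
         (\<forall>j C R. length C = 2 \<and> set C = {2, j+1} \<and> 2 \<le> j \<and> j+2 \<le> n \<and> set R \<subseteq> {x. x=0 \<and> 3\<le>j} \<union> {3..j} \<and> j \<le> t+2
            \<longrightarrow> cops_force (wheel_E n) t C R)"
proof (induction t)
  case 0
  show ?case
  proof (intro conjI allI impI)
    fix j C R assume h: "length C = 2 \<and> set C = {0, j+1} \<and> 2 \<le> j \<and> j+2 \<le> n \<and> set R \<subseteq> {2..j} \<and> j \<le> (0::nat)+2 \<and> 1 \<le> (0::nat)"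
    then show "cops_force (wheel_E n) 0 C R" by simp
  next
    fix j C R assume h: "length C = 2 \<and> set C = {2, j+1} \<and> 2 \<le> j \<and> j+2 \<le> n \<and> set R \<subseteq> {x. x=0 \<and> 3\<le>j} \<union> {3..j} \<and> j \<le> (0::nat)+2"
    then have "set R = {}" by auto
    then show "cops_force (wheel_E n) 0 C R" by simp
  qed
next
  case (Suc t)
  show ?case
  proof (intro conjI allI impI)
    fix j C R assume h: "length C = 2 \<and> set C = {0, j+1} \<and> 2 \<le> j \<and> j+2 \<le> n \<and> set R \<subseteq> {2..j} \<and> j \<le> Suc t+2 \<and> 1 \<le> Suc t"
    define f where "f = (\<lambda>x::nat. if x = 0 then 2 else j)"
    have st: "list_all2 (step (wheel_E n)) C (map f C)"
    proof (rule map_step)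
      fix x assume "x \<in> set C"
      then have "x = 0 \<or> x = j + 1" using h by auto
      then show "step (wheel_E n) x (f x)"
      proof
        assume "x = 0" then show ?thesis using wE_hub[of 2 n] h by (simp add: f_def step_def)
      next
        assume "x = j + 1" then show ?thesis using wE_succ[OF n, of j] h by (simp add: f_def step_def)
      qed
    qed
    have sC': "set (map f C) = {2, j}" using h by (auto simp: f_def)
    show "cops_force (wheel_E n) (Suc t) C R"
    proof (rule force_step[OF st])
      fix R' assume R': "length R' \<le> length (alive (map f C) R)" "set R' \<inter> set (map f C) = {}"
          "\<forall>r'\<in>set R'. \<exists>r\<in>set R. r \<notin> set (map f C) \<and> step (wheel_E n) r r'"
      show "cops_force (wheel_E n) t (map f C) R'"
      proof (cases "j \<le> 3")
        case True
        have "R' = []"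
          by (rule no_src_nil[OF R'(3)[unfolded sC']]) (use h True in auto)
        then show ?thesis by simp
      next
        case False
        have "set R' \<subseteq> {x. x=0 \<and> 3\<le>j-1} \<union> {3..j-1}"
        proof
          fix y assume y: "y \<in> set R'"
          then obtain r where r: "r \<in> set R" "r \<notin> {2, j}" "step (wheel_E n) r y" using R'(3) sC' by auto
          have r2: "3 \<le> r" "r + 1 \<le> j" using r h by auto
          have "y = 0 \<or> y + 1 = r \<or> y = r \<or> y = r + 1" by (rule nbr[OF n _ _ r(3)]) (use r2 h in auto)
          moreover have "y \<notin> {2, j}" using y R'(2)[unfolded sC'] by blast
          ultimately show "y \<in> {x. x=0 \<and> 3\<le>j-1} \<union> {3..j-1}" using r2 False by auto
        qed
        moreover have "set (map f C) = {2, (j-1)+1}" using sC' False by simp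
        moreover have "length (map f C) = 2" "2 \<le> j - 1" "(j-1)+2 \<le> n" "j - 1 \<le> t + 2" using h False by auto
        ultimately show ?thesis using conjunct2[OF Suc.IH, rule_format, where j="j-1" and C="map f C" and R="R'"] by blast
      qed
    qed
  next
    fix j C R assume h: "length C = 2 \<and> set C = {2, j+1} \<and> 2 \<le> j \<and> j+2 \<le> n \<and> set R \<subseteq> {x. x=0 \<and> 3\<le>j} \<union> {3..j} \<and> j \<le> Suc t+2"
    define f where "f = (\<lambda>x::nat. if x = 2 then 0 else j)"
    have st: "list_all2 (step (wheel_E n)) C (map f C)"
    proof (rule map_step)
      fix x assume "x \<in> set C"
      then have "x = 2 \<or> x = j + 1" using h by auto
      then show "step (wheel_E n) x (f x)"
      proof
        assume "x = 2" then show ?thesis using wE_hub[of 2 n] h by (simp add: f_def step_def)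
      next
        assume "x = j + 1" then show ?thesis using wE_succ[OF n, of j] h by (simp add: f_def step_def)
      qed
    qed
    have sC': "set (map f C) = {0, j}" using h by (auto simp: f_def)
    show "cops_force (wheel_E n) (Suc t) C R"
    proof (rule force_step[OF st])
      fix R' assume R': "length R' \<le> length (alive (map f C) R)" "set R' \<inter> set (map f C) = {}"
          "\<forall>r'\<in>set R'. \<exists>r\<in>set R. r \<notin> set (map f C) \<and> step (wheel_E n) r r'"
      show "cops_force (wheel_E n) t (map f C) R'"
      proof (cases "j \<le> 3")
        case True
        have "R' = []"
          by (rule no_src_nil[OF R'(3)[unfolded sC']]) (use h True in auto)
        then show ?thesis by simp
      next
        case False
        have "set R' \<subseteq> {2..j-1}"
        proof
          fix y assume y: "y \<in> set R'"
          then obtain r where r: "r \<in> set R" "r \<notin> {0, j}" "step (wheel_E n) r y" using R'(3) sC' by auto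
          have r2: "3 \<le> r" "r + 1 \<le> j" using r h by auto
          have "y = 0 \<or> y + 1 = r \<or> y = r \<or> y = r + 1" by (rule nbr[OF n _ _ r(3)]) (use r2 h in auto)
          moreover have "y \<notin> {0, j}" using y R'(2)[unfolded sC'] by blast
          ultimately show "y \<in> {2..j-1}" using r2 False by auto
        qed
        moreover have "set (map f C) = {0, (j-1)+1}" using sC' False by simp
        moreover have "1 \<le> t" using h False by simp
        moreover have "length (map f C) = 2" "2 \<le> j - 1" "(j-1)+2 \<le> n" "j - 1 \<le> t + 2" using h False by auto
        ultimately show ?thesis using conjunct1[OF Suc.IH, rule_format, where j="j-1" and C="map f C" and R="R'"] by blast
      qed
    qed
  qed
qed
lemma capt2_upper: assumes n: "n \<ge> 4" shows "capt_within (wheel_V n) (wheel_E n) 2 m (n-3)"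
  unfolding capt_within_def
proof (intro exI[of _ "[0,1]"] conjI allI impI)
  show "set [0,1] \<subseteq> wheel_V n" using n by (auto simp: wheel_V_def)
  fix R :: "nat list" assume R: "length R = m \<and> set R \<subseteq> wheel_V n"
  define R0 where "R0 = alive [0,1] R"
  have R0: "set R0 \<subseteq> {2..n-1}" using R by (auto simp: alive_def wheel_V_def R0_def)
  have eq: "n - 3 = Suc (n - 4)" using n by simp
  have e12: "wheel_E n 1 2" using wE_succ[OF n, of 1] n by (auto simp: numeral_2_eq_2)
  have e0: "wheel_E n 0 (n-1)" using wE_hub[of "n-1" n] n by simp
  have st: "list_all2 (step (wheel_E n)) [0,1] [n-1, 2]"
    using e12 e0 by (simp add: step_def)
  show "cops_force (wheel_E n) (n - 3) [0, 1] (alive [0, 1] R)"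
    unfolding eq R0_def[symmetric]
  proof (rule force_step[OF st])
    fix R' assume R': "length R' \<le> length (alive [n - 1, 2] R0)" "set R' \<inter> set [n - 1, 2] = {}"
      "\<forall>r'\<in>set R'. \<exists>r\<in>set R0. r \<notin> set [n - 1, 2] \<and> step (wheel_E n) r r'"
    have "set R' \<subseteq> {x. x=0 \<and> 3\<le>n-2} \<union> {3..n-2}"
    proof
      fix y assume y: "y \<in> set R'"
      then obtain r where r: "r \<in> set R0" "r \<notin> {n-1, 2}" "step (wheel_E n) r y" using R'(3) by auto
      have "r \<in> {2..n-1}" using r(1) R0 by blast
      then have r2: "3 \<le> r" "r + 2 \<le> n" using r(2) n by auto
      have "y = 0 \<or> y + 1 = r \<or> y = r \<or> y = r + 1" by (rule nbr[OF n _ _ r(3)]) (use r2 in auto)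
      moreover have "y \<notin> {n-1, 2}" using y R'(2) by auto
      ultimately show "y \<in> {x. x=0 \<and> 3\<le>n-2} \<union> {3..n-2}" using r2 n by auto
    qed
    moreover have "set [n-1, 2] = {2, (n-2)+1}" "length [n-1, 2::nat] = 2" "2 \<le> n - 2" "(n-2)+2 \<le> n" "n - 2 \<le> (n-4) + 2"
      using n by auto
    ultimately show "cops_force (wheel_E n) (n - 4) [n - 1, 2] R'"
      using conjunct2[OF two_cop[OF n], rule_format, where j="n-2" and C="[n-1,2]" and R="R'"] by blast
  qed
qed simp
lemma down_closed': fixes A :: "nat set" assumes dc: "\<forall>a\<in>A. 2 \<le> a \<longrightarrow> a - 1 \<in> A"
  shows "a \<in> A \<Longrightarrow> 1 \<le> u \<Longrightarrow> u \<le> a \<Longrightarrow> u \<in> A"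
proof (induction "a - u" arbitrary: a)
  case 0
  then have "a = u" by linarith
  then show ?case using 0 by simp
next
  case (Suc k)
  then have "2 \<le> a" by linarith
  then have "a - 1 \<in> A" using dc Suc.prems(1) by blast
  moreover have "k = (a - 1) - u" "u \<le> a - 1" using Suc.hyps(2) by linarith+
  ultimately show ?case using Suc.hyps(1) Suc.prems(2) by blast
qed

lemma up_closed': fixes A :: "nat set" assumes uc: "\<forall>a\<in>A. a + 1 \<le> N \<longrightarrow> a + 1 \<in> A"
  shows "a \<in> A \<Longrightarrow> a \<le> u \<Longrightarrow> u \<le> N \<Longrightarrow> u \<in> A"
proof (induction "u - a" arbitrary: a)
  case 0
  then have "a = u" by linarith
  then show ?case using 0 by simp
next
  case (Suc k)
  then have "a + 1 \<le> N" by linarith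
  then have "a + 1 \<in> A" using uc Suc.prems(1) by blast
  moreover have "k = u - (a + 1)" "a + 1 \<le> u" using Suc.hyps(2) by linarith+
  ultimately show ?case using Suc.hyps(1) Suc.prems(3) by blast
qed

lemma arc_pr: assumes n: "n \<ge> 4" and A: "A \<subseteq> {1..<n}" "a0 \<in> A" "b \<in> {1..<n}" "b \<notin> A"
  shows "\<exists>a\<in>A. pr n a \<notin> A"
proof (rule ccontr)
  assume "\<not> ?thesis"
  then have cl: "\<forall>a\<in>A. pr n a \<in> A" by blast
  have dc: "\<forall>a\<in>A. 2 \<le> a \<longrightarrow> a - 1 \<in> A"
  proof (intro ballI impI)
    fix a assume "a \<in> A" "2 \<le> a"
    then have "pr n a = a - 1" by (simp add: pr_def)
    then show "a - 1 \<in> A" using cl \<open>a \<in> A\<close> by metis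
  qed
  have "a0 \<in> {1..<n}" using A(1,2) by blast
  then have "1 \<le> a0" by simp
  have "1 \<in> A" using down_closed'[OF dc A(2) order_refl \<open>1 \<le> a0\<close>] .
  then have "pr n 1 \<in> A" using cl by blast
  then have "n - 1 \<in> A" by (simp add: pr_def)
  have "1 \<le> b" "b \<le> n - 1" using A(3) by auto
  then have "b \<in> A" using down_closed'[OF dc \<open>n - 1 \<in> A\<close>] by blast
  then show False using A by blast
qed

lemma arc_sc: assumes n: "n \<ge> 4" and A: "A \<subseteq> {1..<n}" "a0 \<in> A" "b \<in> {1..<n}" "b \<notin> A"
  shows "\<exists>a\<in>A. sc n a \<notin> A"
proof (rule ccontr)
  assume "\<not> ?thesis"
  then have cl: "\<forall>a\<in>A. sc n a \<in> A" by blast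
  have uc: "\<forall>a\<in>A. a + 1 \<le> n - 1 \<longrightarrow> a + 1 \<in> A"
  proof (intro ballI impI)
    fix a assume a: "a \<in> A" "a + 1 \<le> n - 1"
    have "a mod (n - 1) = a" using a(2) by simp
    then have "sc n a = a + 1" by (simp add: sc_def)
    then show "a + 1 \<in> A" using cl a(1) by metis
  qed
  have "a0 \<in> {1..<n}" using A(1,2) by blast
  then have "a0 < n" by simp
  then have "a0 \<le> n - 1" by linarith
  have "n - 1 \<in> A" using up_closed'[OF uc A(2) \<open>a0 \<le> n - 1\<close> order_refl] .
  then have "sc n (n - 1) \<in> A" using cl by blast
  then have "1 \<in> A" by (simp add: sc_def)
  have "1 \<le> b" "b \<le> n - 1" using A(3) by auto
  then have "b \<in> A" using up_closed'[OF uc \<open>1 \<in> A\<close>] by blast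
  then show False using A by blast
qed
lemma step_to_hub: "x < n \<Longrightarrow> step (wheel_E n) x 0"
  unfolding step_def using wE_hub[of x n] by (cases "x = 0") auto

lemma step_from_hub: "x < n \<Longrightarrow> step (wheel_E n) 0 x"
  unfolding step_def using wE_hub[of x n] by (cases "x = 0") auto

lemma count_step:
  assumes n: "n \<ge> 4" and K: "K \<subseteq> {0..<n}" "K \<noteq> {}" "card K + 3 \<le> n"
    and C': "set C' \<subseteq> {0..<n}" "length C' = 2"
  shows "card ({0..<n} - ({w. \<exists>x\<in>({0..<n} - K) - set C'. step (wheel_E n) x w} - set C')) \<le> card K + 1"
proof -
  define V where "V = {0..<n::nat}"
  define D where "D = K \<union> set C'"
  define K' where "K' = V - ({w. \<exists>x\<in>(V - K) - set C'. step (wheel_E n) x w} - set C')"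
  have finV: "finite V" unfolding V_def by simp
  have finK: "finite K" using K(1) finite_subset by blast
  have finD: "finite D" unfolding D_def using finK by simp
  have K'm: "v \<in> K' \<longleftrightarrow> v < n \<and> (v \<in> set C' \<or> (\<forall>x. x < n \<longrightarrow> x \<notin> D \<longrightarrow> \<not> step (wheel_E n) x v))" for v
    unfolding K'_def V_def D_def by auto
  have K'D: "K' \<subseteq> D"
  proof
    fix v assume v: "v \<in> K'"
    show "v \<in> D"
    proof (rule ccontr)
      assume "v \<notin> D"
      moreover have "step (wheel_E n) v v" by (simp add: step_def)
      ultimately show False using v K'm D_def by blast
    qed
  qed
  have cC: "card (set C') \<le> 2" using card_length[of C'] C'(2) by simp
  have cK1: "1 \<le> card K" using K(2) finK by (simp add: Suc_le_eq card_gt_0_iff)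
  have Ddisj: "D = K \<union> (set C' - K)" "K \<inter> (set C' - K) = {}" unfolding D_def by auto
  have cD: "card D = card K + card (set C' - K)"
    using card_Un_disjoint[OF finK _ Ddisj(2)] Ddisj(1) by simp
  have cC2: "card (set C' - K) \<le> 2" using cC card_mono[of "set C'" "set C' - K"] by (meson Diff_subset List.finite_set le_trans)
  show ?thesis unfolding K'_def[unfolded V_def, symmetric]
  proof (cases "0 \<in> D")
    case False
    have "K' \<subseteq> set C'"
    proof
      fix v assume v: "v \<in> K'"
      show "v \<in> set C'"
      proof (rule ccontr)
        assume "v \<notin> set C'"
        then have "\<forall>x. x < n \<longrightarrow> x \<notin> D \<longrightarrow> \<not> step (wheel_E n) x v" using v K'm by blast
        moreover have "v < n" using v K'm by blast
        ultimately show False using False step_from_hub[of v n] n by auto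
      qed
    qed
    then have "card K' \<le> card (set C')" by (simp add: card_mono)
    then show "card K' \<le> card K + 1" using cC cK1 by linarith
  next
    case True
    show "card K' \<le> card K + 1"
    proof (cases "card (set C' - K) \<le> 1")
      case True
      have "card K' \<le> card D" by (rule card_mono[OF finD K'D])
      then show ?thesis using cD True by linarith
    next
      case False
      then have c2: "card (set C' - K) = 2" using cC2 by linarith
      have disj: "set C' \<inter> K = {}"
      proof (rule ccontr)
        assume "set C' \<inter> K \<noteq> {}"
        then have "set C' - K \<subset> set C'" by blast
        then have "card (set C' - K) < card (set C')" by (simp add: psubset_card_mono)
        then show False using c2 cC by linarith
      qed
      have cDn: "card D + 1 \<le> n" using cD c2 K(3) by linarith
      have DV: "D \<subseteq> V" unfolding D_def V_def using K(1) C'(1) by blast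
      obtain y where y: "y < n" "y \<notin> D"
      proof -
        have "D \<noteq> V" using cDn unfolding V_def by auto
        then have "\<exists>y. y \<in> V \<and> y \<notin> D" using DV by blast
        then show ?thesis using that unfolding V_def by auto
      qed
      have key: "\<exists>x\<in>K. x \<notin> K'"
      proof (cases "0 \<in> K")
        case True
        have "0 \<notin> set C'" using True disj by blast
        moreover have "step (wheel_E n) y 0" using step_to_hub y(1) by blast
        ultimately have "0 \<notin> K'" using K'm y by blast
        then show ?thesis using True by blast
      next
        case False
        then have n0K: "0 \<notin> K" by simp
        from False have z: "0 \<in> set C'" using \<open>0 \<in> D\<close> D_def by blast
        have cS: "card (set C') = 2" using c2 disj by (simp add: Diff_triv Int_commute)
        then obtain x1 x2 where x12: "set C' = {x1, x2}" "x1 \<noteq> x2" by (meson card_2_iff)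
        define c where "c = (if x1 = 0 then x2 else x1)"
        have c: "c \<in> set C'" "c \<noteq> 0" unfolding c_def using x12 by auto
        have SC: "set C' = {0, c}" unfolding c_def using x12 z by auto
        define A where "A = K \<union> {c}"
        have cn: "1 \<le> c" "c < n" using c C'(1) by auto
        have KA: "K \<subseteq> {1..<n}"
        proof
          fix x assume "x \<in> K"
          have "x \<noteq> 0" using n0K \<open>x \<in> K\<close> by metis
          moreover have "x \<in> {0..<n}" using K(1) \<open>x \<in> K\<close> by blast
          ultimately show "x \<in> {1..<n}" by simp
        qed
        then have A1: "A \<subseteq> {1..<n}" unfolding A_def using cn by auto
        have cK: "c \<notin> K" using c disj by blast
        have cA: "card A = card K + 1" unfolding A_def using cK finK by simp
        obtain b where b: "b \<in> {1..<n}" "b \<notin> A"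
        proof -
          have "card A < card {1..<n::nat}" using cA K(3) by simp
          have finA: "finite A" unfolding A_def using finK by simp
          have "\<not> {1..<n} \<subseteq> A"
          proof
            assume "{1..<n} \<subseteq> A"
            then have "card {1..<n} \<le> card A" by (rule card_mono[OF finA])
            then show False using \<open>card A < card {1..<n::nat}\<close> by linarith
          qed
          then show ?thesis using that by blast
        qed
        have DA: "D = insert 0 A" unfolding D_def A_def using SC by auto
        have nb: "\<exists>x\<in>K. pr n x \<notin> A \<or> sc n x \<notin> A"
        proof -
          obtain a where a: "a \<in> A" "pr n a \<notin> A" using arc_pr[OF n A1 _ b] A_def by blast
          obtain e where e: "e \<in> A" "sc n e \<notin> A" using arc_sc[OF n A1 _ b] A_def by blast
          show ?thesis
          proof (cases "a = c \<and> e = c")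
            case False
            then show ?thesis using a e A_def by blast
          next
            case True
            obtain k0 where "k0 \<in> K" using K(2) by blast
            have cin: "c \<in> {1..<n}" using cn by simp
            obtain a' where a': "a' \<in> K" "pr n a' \<notin> K" using arc_pr[OF n KA \<open>k0 \<in> K\<close> cin cK] by blast
            show ?thesis
            proof (cases "pr n a' = c")
              case False
              then show ?thesis using a' A_def by blast
            next
              case True
              have "a' \<in> {1..<n}" using a' KA by blast
              then have "sc n (pr n a') = a'" using pr_props[OF n] by auto
              then have "sc n c \<in> A" using True a' A_def by auto
              then show ?thesis using e \<open>a = c \<and> e = c\<close> by blast
            qed
          qed
        qed
        then obtain x where x: "x \<in> K" "pr n x \<notin> A \<or> sc n x \<notin> A" by blast
        have xr: "1 \<le> x" "x < n" using x(1) KA by auto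
        have "x \<notin> set C'" using x(1) disj by blast
        moreover have "\<exists>z. z < n \<and> z \<notin> D \<and> step (wheel_E n) z x"
        proof (cases "pr n x \<notin> A")
          case True
          have "1 \<le> pr n x" "pr n x < n" "wheel_E n (pr n x) x" using pr_props[OF n xr] by auto
          then show ?thesis using True DA by (intro exI[of _ "pr n x"]) (simp add: step_def)
        next
          case False
          then have "sc n x \<notin> A" using x(2) by blast
          moreover have "1 \<le> sc n x" "sc n x < n" "wheel_E n (sc n x) x" using sc_props[OF n xr] by auto
          ultimately show ?thesis using DA by (intro exI[of _ "sc n x"]) (simp add: step_def)
        qed
        ultimately have "x \<notin> K'" using K'm by blast
        then show ?thesis using x(1) by blast
      qed
      then obtain x where x: "x \<in> K" "x \<notin> K'" by blast
      have "K' \<subseteq> D - {x}" using K'D x by blast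
      then have "card K' \<le> card (D - {x})" using finD by (simp add: card_mono)
      also have "\<dots> = card D - 1" using x(1) D_def finD by simp
      finally show ?thesis using cD c2 by linarith
    qed
  qed
qed
lemma one_spread: assumes n: "n \<ge> 4" and c: "c < n" "c' < n"
  shows "{w. \<exists>x\<in>({0..<n} - {c}) - {c'}. step (wheel_E n) x w} - {c'} = {0..<n} - {c'}"
proof
  show "{w. \<exists>x\<in>({0..<n} - {c}) - {c'}. step (wheel_E n) x w} - {c'} \<subseteq> {0..<n} - {c'}"
    using step_lt by fastforce
  show "{0..<n} - {c'} \<subseteq> {w. \<exists>x\<in>({0..<n} - {c}) - {c'}. step (wheel_E n) x w} - {c'}"
  proof
    fix v assume v: "v \<in> {0..<n} - {c'}"
    have "\<exists>x\<in>({0..<n} - {c}) - {c'}. step (wheel_E n) x v"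
    proof (cases "v = c")
      case False
      then show ?thesis using v by (intro bexI[of _ v]) (auto simp: step_def)
    next
      case True
      show ?thesis
      proof (cases "c = 0")
        case True
        define x where "x = (if c' = 1 then 2 else (1::nat))"
        have "x \<noteq> c'" "1 \<le> x" "x < n" "x \<noteq> 0" using n by (auto simp: x_def)
        moreover have "step (wheel_E n) x v" using \<open>v = c\<close> True step_to_hub \<open>x < n\<close> by simp
        ultimately show ?thesis using True by (intro bexI[of _ x]) auto
      next
        case False
        have c1: "1 \<le> c" "c < n" using False c by auto
        show ?thesis
        proof (cases "c' = 0")
          case True
          have "1 \<le> sc n c" "sc n c < n" "sc n c \<noteq> c" "wheel_E n (sc n c) c" using sc_props[OF n c1] by auto
          then show ?thesis using True \<open>v = c\<close> by (intro bexI[of _ "sc n c"]) (auto simp: step_def)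
        next
          case c'0: False
          have "step (wheel_E n) 0 c" using step_from_hub c by blast
          then show ?thesis using c'0 False \<open>v = c\<close> n by (intro bexI[of _ 0]) auto
        qed
      qed
    qed
    then show "v \<in> {w. \<exists>x\<in>({0..<n} - {c}) - {c'}. step (wheel_E n) x w} - {c'}" using v by blast
  qed
qed

definition Good1 :: "nat \<Rightarrow> nat \<Rightarrow> nat list \<Rightarrow> nat set \<Rightarrow> bool" where
  "Good1 n t C S \<longleftrightarrow> length C = 1 \<and> set C \<subseteq> {0..<n} \<and> S = {0..<n} - set C"

definition Good2 :: "nat \<Rightarrow> nat \<Rightarrow> nat list \<Rightarrow> nat set \<Rightarrow> bool" where
  "Good2 n t C S \<longleftrightarrow> S \<subseteq> {0..<n} \<and> length C = 2 \<and> set C \<subseteq> {0..<n} - S \<and> card ({0..<n} - S) + t + 2 \<le> n"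

lemma Good1_a: "n \<ge> 4 \<Longrightarrow> Good1 n t C S \<Longrightarrow> S \<noteq> {} \<and> S \<subseteq> {0..<n}"
proof -
  assume n: "n \<ge> 4" and G: "Good1 n t C S"
  then obtain c where "C = [c]" by (auto simp: Good1_def length_Suc_conv)
  then have "S = {0..<n} - {c}" using G by (simp add: Good1_def)
  moreover have "(if c = 0 then 1 else 0) \<in> {0..<n} - {c}" using n by auto
  ultimately show ?thesis by auto
qed

lemma Good1_b: assumes n: "n \<ge> 4" and G: "Good1 n (Suc t) C S" and st: "list_all2 (step (wheel_E n)) C C'"
  shows "Good1 n t C' ({w. \<exists>x\<in>S - set C'. step (wheel_E n) x w} - set C')"
proof -
  obtain c where c: "C = [c]" using G by (auto simp: Good1_def length_Suc_conv)
  then obtain c' where c': "C' = [c']" using st by (auto simp: list_all2_Cons1)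
  have cn: "c < n" using G c by (simp add: Good1_def)
  have "step (wheel_E n) c c'" using st c c' by simp
  then have cn': "c' < n" using step_lt cn by blast
  have S: "S = {0..<n} - {c}" using G c by (simp add: Good1_def)
  show ?thesis unfolding Good1_def c' using one_spread[OF n cn cn'] S cn' by simp
qed

lemma Good2_a: "Good2 n t C S \<Longrightarrow> S \<noteq> {} \<and> S \<subseteq> {0..<n}"
proof -
  assume G: "Good2 n t C S"
  then have "card ({0..<n} - S) + 2 \<le> n" "S \<subseteq> {0..<n}" by (auto simp: Good2_def)
  moreover have "S = {} \<Longrightarrow> card ({0..<n} - S) = n" by simp
  ultimately show ?thesis by auto
qed

lemma Good2_b: assumes n: "n \<ge> 4" and G: "Good2 n (Suc t) C S" and st: "list_all2 (step (wheel_E n)) C C'"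
  shows "Good2 n t C' ({w. \<exists>x\<in>S - set C'. step (wheel_E n) x w} - set C')"
proof -
  define S' where "S' = {w. \<exists>x\<in>S - set C'. step (wheel_E n) x w} - set C'"
  define K where "K = {0..<n} - S"
  have SV: "S \<subseteq> {0..<n}" and lC: "length C = 2" and CK: "set C \<subseteq> K" and cK: "card K + Suc t + 2 \<le> n"
    using G by (auto simp: Good2_def K_def)
  have SK: "S = {0..<n} - K" unfolding K_def using SV by blast
  have S'V: "S' \<subseteq> {0..<n}" unfolding S'_def using SV step_lt by fastforce
  have lC': "length C' = 2" using st lC by (simp add: list_all2_lengthD[symmetric])
  have C'V: "set C' \<subseteq> {0..<n}"
  proof
    fix y assume "y \<in> set C'"
    then obtain x where "x \<in> set C" "step (wheel_E n) x y" using list_all2_stepD[OF st] by blast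
    moreover have "x < n" using \<open>x \<in> set C\<close> CK K_def by auto
    ultimately show "y \<in> {0..<n}" using step_lt by auto
  qed
  have KV: "K \<subseteq> {0..<n}" unfolding K_def by blast
  have Kne: "K \<noteq> {}" using CK lC by (cases C) auto
  have cnt: "card ({0..<n} - S') \<le> card K + 1"
    unfolding S'_def SK using count_step[OF n KV Kne _ C'V lC'] cK by simp
  show ?thesis unfolding S'_def[symmetric] Good2_def
    using S'V lC' C'V cnt cK by (auto simp: S'_def)
qed
lemma low1: assumes n: "n \<ge> 4" and m: "n * n ^ t \<le> m"
  shows "\<not> capt_within (wheel_V n) (wheel_E n) 1 m t"
  unfolding wheel_V_def
proof (rule no_capt[where Good = "Good1 n"])
  show "finite {0..<n}" by simp
  show "\<And>t C S. Good1 n t C S \<Longrightarrow> S \<noteq> {} \<and> S \<subseteq> {0..<n}" using Good1_a[OF n] by blast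
  show "\<And>t C S C'. Good1 n (Suc t) C S \<Longrightarrow> list_all2 (step (wheel_E n)) C C' \<Longrightarrow>
          Good1 n t C' ({w. \<exists>x\<in>S - set C'. step (wheel_E n) x w} - set C')" using Good1_b[OF n] by blast
  show "\<And>C. length C = 1 \<Longrightarrow> set C \<subseteq> {0..<n} \<Longrightarrow> Good1 n t C ({0..<n} - set C)" by (simp add: Good1_def)
  show "card {0..<n} * card {0..<n} ^ t \<le> m" using m by simp
qed

lemma low2: assumes n: "n \<ge> 4" and t: "t + 4 \<le> n" and m: "n * n ^ t \<le> m"
  shows "\<not> capt_within (wheel_V n) (wheel_E n) 2 m t"
  unfolding wheel_V_def
proof (rule no_capt[where Good = "Good2 n"])
  show "finite {0..<n}" by simp
  show "\<And>t C S. Good2 n t C S \<Longrightarrow> S \<noteq> {} \<and> S \<subseteq> {0..<n}" using Good2_a by blast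
  show "\<And>t C S C'. Good2 n (Suc t) C S \<Longrightarrow> list_all2 (step (wheel_E n)) C C' \<Longrightarrow>
          Good2 n t C' ({w. \<exists>x\<in>S - set C'. step (wheel_E n) x w} - set C')" using Good2_b[OF n] by blast
  show "Good2 n t C ({0..<n} - set C)" if C: "length C = 2" "set C \<subseteq> {0..<n}" for C
  proof -
    have e: "{0..<n} - ({0..<n} - set C) = set C" using C by blast
    have "card (set C) \<le> 2" using card_length[of C] C by simp
    then show ?thesis unfolding Good2_def e using C t by auto
  qed
  show "card {0..<n} * card {0..<n} ^ t \<le> m" using m by simp
qed

lemma capt1_big: assumes n: "n \<ge> 4" and m: "n * n ^ T \<le> m"
  shows "T < capt (wheel_V n) (wheel_E n) 1 m"
proof (rule ccontr)
  assume "\<not> T < capt (wheel_V n) (wheel_E n) 1 m"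
  then have le: "capt (wheel_V n) (wheel_E n) 1 m \<le> T" by simp
  have "capt_within (wheel_V n) (wheel_E n) 1 m (capt (wheel_V n) (wheel_E n) 1 m)"
    unfolding capt_def by (rule LeastI[of _ "2*m"]) (rule capt1_upper[OF n])
  moreover have "n * n ^ (capt (wheel_V n) (wheel_E n) 1 m) \<le> m"
  proof -
    have "n ^ (capt (wheel_V n) (wheel_E n) 1 m) \<le> n ^ T" using le n by (simp add: power_increasing)
    then show ?thesis using m by (meson le_trans mult_le_mono2)
  qed
  ultimately show False using low1[OF n] by blast
qed

lemma capt2_eq: assumes n: "n \<ge> 4" and m: "n * n ^ (n - 4) \<le> m"
  shows "capt (wheel_V n) (wheel_E n) 2 m = n - 3"
  unfolding capt_def
proof (rule Least_equality)
  show "capt_within (wheel_V n) (wheel_E n) 2 m (n - 3)" by (rule capt2_upper[OF n])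
  fix y assume y: "capt_within (wheel_V n) (wheel_E n) 2 m y"
  show "n - 3 \<le> y"
  proof (rule ccontr)
    assume "\<not> n - 3 \<le> y"
    then have yl: "y + 4 \<le> n" "y \<le> n - 4" by auto
    have "n ^ y \<le> n ^ (n - 4)" using yl n by (simp add: power_increasing)
    then have "n * n ^ y \<le> m" using m by (meson le_trans mult_le_mono2)
    then show False using low2[OF n yl(1)] y by blast
  qed
qed

theorem mainTheorem16:
  fixes n :: nat
  assumes "n \<ge> 4"
  shows "\<not> strong_cop_win (wheel_V n) (wheel_E n) 1
       \<and> strong_cop_win (wheel_V n) (wheel_E n) 2
       \<and> (\<lambda>m. real (capt (wheel_V n) (wheel_E n) 2 m)) \<longlonglongrightarrow> real n - 3"
proof -
  have n: "n \<ge> 4" by fact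
  have lim2: "(\<lambda>m. real (capt (wheel_V n) (wheel_E n) 2 m)) \<longlonglongrightarrow> real n - 3"
  proof (rule tendsto_eventually)
    have "\<forall>m\<ge>n * n ^ (n - 4). real (capt (wheel_V n) (wheel_E n) 2 m) = real n - 3"
      using capt2_eq[OF n] n by (simp add: of_nat_diff)
    then show "\<forall>\<^sub>F m in sequentially. real (capt (wheel_V n) (wheel_E n) 2 m) = real n - 3"
      unfolding eventually_sequentially by blast
  qed
  have cw2: "cop_win (wheel_V n) (wheel_E n) 2"
    unfolding cop_win_def using capt2_upper[OF n] by blast
  have not1: "\<not> (\<exists>L. (\<lambda>m. real (capt (wheel_V n) (wheel_E n) 1 m)) \<longlonglongrightarrow> L)"
  proof
    assume "\<exists>L. (\<lambda>m. real (capt (wheel_V n) (wheel_E n) 1 m)) \<longlonglongrightarrow> L"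
    then obtain L where "(\<lambda>m. real (capt (wheel_V n) (wheel_E n) 1 m)) \<longlonglongrightarrow> L" by blast
    then have "Bseq (\<lambda>m. real (capt (wheel_V n) (wheel_E n) 1 m))" by (intro convergent_imp_Bseq convergentI)
    then obtain B where B: "\<And>m. norm (real (capt (wheel_V n) (wheel_E n) 1 m)) \<le> B" by (meson BseqE)
    define T where "T = nat \<lceil>B\<rceil>"
    have "T < capt (wheel_V n) (wheel_E n) 1 (n * n ^ T)" by (rule capt1_big[OF n order_refl])
    then have "real T < real (capt (wheel_V n) (wheel_E n) 1 (n * n ^ T))" by simp
    moreover have "B \<le> real T" unfolding T_def by linarith
    ultimately show False using B[of "n * n ^ T"] by simp
  qed
  show ?thesis using lim2 cw2 not1 unfolding strong_cop_win_def by blast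
qed

end
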